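(* Let $G$ be a connected balanced weighted graph on the vertex set $V=\{1,\dots,n\}$ with symmetric real edge weights $\gamma_{ij}=\gamma_{ji}$, and let $V=V_1\cup V_2$ be a decomposition into two disjoint subsets such that $\gamma_{ij}\ge 0$ whenever $i,j$ lie in the same subset and $\gamma_{ij}\le 0$ whenever $i,j$ lie in different subsets. Let $W\in\mathcal{W}$, let $\kappa>0$, and let $x\in\mathbb{R}^n$ be a global minimizer of $$E_{W,G,\kappa}(x)=\sum_{i=1}^n W(x_i)+\frac{\kappa}{2}\sum_{i,j=1}^n\gamma_{ij}(x_i-x_j)^2 .$$ Then $x_i\neq 0$ for all $i$, and for all $i,j$, $x_i$ and $x_j$ have the same sign if and only if $i$ and $j$ belong to the same subset ($V_1$ or $V_2$).
   Context: A weighted graph $G=(V,E,\Gamma)$ has vertices $V=\{1,\dots,n\}$ and symmetric real weights $\gamma_{ij}=\gamma_{ji}$ (possibly negative) on its edges; $\gamma_{ij}=0$ if $i,j$ are not joined by an edge. $G$ is connected if the graph whose edges are the pairs $\{i,j\}$ with $\gamma_{ij}\neq0$ is connected. $G$ is balanced if every cycle contains an even number of edges with negative weight; for balanced graphs a decomposition $V=V_1\cup V_2$ as in the claim exists (Cartwright–Harary). $\mathcal{W}$ is the set of even functions $W\in C^2(\mathbb{R})$ for which there is some $m>0$ with $W'(\pm m)=0$, $W'(x)>0$ for $x\in(-m,0)\cup(m,\infty)$, $W'(x)<0$ for $x\in(-\infty,-m)\cup(0,m)$, and $\lim_{x\to\pm\infty}W(x)/x^2=\infty$. *)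

theory Defs
  imports "HOL-Analysis.Analysis"
begin

text \<open>Vertices are 1..n; weights gamma :: nat => nat => real; points of R^n are
  functions nat => real, only the values on {1..n} matter.\<close>

definition C2_real :: "(real \<Rightarrow> real) \<Rightarrow> bool" where
  "C2_real W \<longleftrightarrow> (\<forall>x. W differentiable at x) \<and> (\<forall>x. deriv W differentiable at x)
     \<and> continuous_on UNIV (deriv (deriv W))"

definition W_class :: "(real \<Rightarrow> real) set" where
  "W_class = {W. (\<forall>x. W (-x) = W x) \<and> C2_real W \<and>
     (\<exists>m>0. deriv W m = 0 \<and> deriv W (-m) = 0 \<and>
        (\<forall>x. (-m < x \<and> x < 0) \<or> m < x \<longrightarrow> deriv W x > 0) \<and>
        (\<forall>x. x < -m \<or> (0 < x \<and> x < m) \<longrightarrow> deriv W x < 0)) \<and>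
     filterlim (\<lambda>x. W x / x\<^sup>2) at_top at_top \<and>
     filterlim (\<lambda>x. W x / x\<^sup>2) at_top at_bot}"

definition energy :: "(real \<Rightarrow> real) \<Rightarrow> nat \<Rightarrow> (nat \<Rightarrow> nat \<Rightarrow> real) \<Rightarrow> real \<Rightarrow> (nat \<Rightarrow> real) \<Rightarrow> real" where
  "energy W n \<gamma> \<kappa> x = (\<Sum>i=1..n. W (x i)) +
     \<kappa> / 2 * (\<Sum>i=1..n. \<Sum>j=1..n. \<gamma> i j * (x i - x j)\<^sup>2)"

definition graph_connected :: "nat \<Rightarrow> (nat \<Rightarrow> nat \<Rightarrow> real) \<Rightarrow> bool" where
  "graph_connected n \<gamma> \<longleftrightarrow> (\<forall>i\<in>{1..n}. \<forall>j\<in>{1..n}.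
     (i, j) \<in> ({(a, b). a \<in> {1..n} \<and> b \<in> {1..n} \<and> \<gamma> a b \<noteq> 0})\<^sup>*)"

definition is_cycle :: "nat \<Rightarrow> (nat \<Rightarrow> nat \<Rightarrow> real) \<Rightarrow> nat list \<Rightarrow> bool" where
  "is_cycle n \<gamma> cs \<longleftrightarrow> length cs \<ge> 3 \<and> distinct cs \<and> set cs \<subseteq> {1..n} \<and>
     (\<forall>k < length cs. \<gamma> (cs ! k) (cs ! ((k + 1) mod length cs)) \<noteq> 0)"

definition balanced :: "nat \<Rightarrow> (nat \<Rightarrow> nat \<Rightarrow> real) \<Rightarrow> bool" where
  "balanced n \<gamma> \<longleftrightarrow> (\<forall>cs. is_cycle n \<gamma> cs \<longrightarrow>
     even (card {k. k < length cs \<and> \<gamma> (cs ! k) (cs ! ((k + 1) mod length cs)) < 0}))"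

end

theory Submission
  imports Defs
begin

lemma W_facts:
  assumes "W \<in> W_class"
  obtains m where "m > 0" "\<And>t. 0 < t \<Longrightarrow> t \<le> m \<Longrightarrow> W t < W 0" "\<And>x. W (-x) = W x"
proof -
  from assms obtain m where m: "m > 0" "\<forall>x. 0 < x \<and> x < m \<longrightarrow> deriv W x < 0"
    and ev: "\<And>x. W (-x) = W x" and c2: "C2_real W"
    unfolding W_class_def by auto
  have d: "\<And>x. DERIV W x :> deriv W x" using c2 unfolding C2_real_def
    using DERIV_deriv_iff_real_differentiable by blast
  have cont: "continuous_on A W" for A
    using d by (meson DERIV_isCont continuous_at_imp_continuous_on)
  have "W t < W 0" if "0 < t" "t \<le> m" for t
    apply (rule DERIV_neg_imp_decreasing_open[OF that(1)])
    using d m that apply force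
    by (rule cont)
  then show ?thesis using that m ev by blast
qed

lemma boundary_edge:
  assumes "(i, k) \<in> R\<^sup>*" "P i" "\<not> P k"
  shows "\<exists>a b. (a, b) \<in> R \<and> P a \<and> \<not> P b"
  using assms by (induction rule: rtrancl_induct) auto

lemma energy_pert:
  fixes y :: "nat \<Rightarrow> real"
  assumes sym: "\<And>i j. \<gamma> i j = \<gamma> j i" and a: "a \<in> {1..n}"
  shows "energy W n \<gamma> \<kappa> (\<lambda>i. y i + (if i = a then u else 0)) = energy W n \<gamma> \<kappa> y
     + (W (y a + u) - W (y a)) + \<kappa> / 2 * (4 * u * (\<Sum>j=1..n. \<gamma> a j * (y a - y j))
     + u\<^sup>2 * (\<Sum>i=1..n. \<Sum>j=1..n. \<gamma> i j * ((if i = a then 1 else 0) - (if j = a then 1 else 0))\<^sup>2))"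
proof -
  define d :: "nat \<Rightarrow> real" where "d i = (if i = a then 1 else 0)" for i
  have yd: "(\<lambda>i. y i + (if i = a then u else 0)) = (\<lambda>i. y i + u * d i)"
    by (auto simp: d_def)
  have W1: "(\<Sum>i=1..n. W (y i + u * d i)) = (\<Sum>i=1..n. W (y i)) + (W (y a + u) - W (y a))"
  proof -
    have "(\<Sum>i=1..n. W (y i + u * d i) - W (y i)) = (\<Sum>i=1..n. if i = a then W (y a + u) - W (y a) else 0)"
      by (rule sum.cong) (auto simp: d_def)
    also have "\<dots> = W (y a + u) - W (y a)" using a by simp
    finally show ?thesis by (simp add: sum_subtractf)
  qed
  have pt: "\<gamma> i j * ((y i + u * d i) - (y j + u * d j))\<^sup>2 = \<gamma> i j * (y i - y j)\<^sup>2
      + 2 * u * (\<gamma> i j * (y i - y j) * d i) - 2 * u * (\<gamma> i j * (y i - y j) * d j)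
      + u\<^sup>2 * (\<gamma> i j * (d i - d j)\<^sup>2)" for i j
    by (simp add: power2_eq_square algebra_simps)
  have s1: "(\<Sum>i=1..n. \<Sum>j=1..n. \<gamma> i j * (y i - y j) * d i) = (\<Sum>j=1..n. \<gamma> a j * (y a - y j))"
  proof -
    have "(\<Sum>i=1..n. \<Sum>j=1..n. \<gamma> i j * (y i - y j) * d i) = (\<Sum>i=1..n. if i = a then (\<Sum>j=1..n. \<gamma> a j * (y a - y j)) else 0)"
      by (rule sum.cong) (auto simp: d_def)
    then show ?thesis using a by simp
  qed
  have s2: "(\<Sum>i=1..n. \<Sum>j=1..n. \<gamma> i j * (y i - y j) * d j) = - (\<Sum>j=1..n. \<gamma> a j * (y a - y j))"
  proof -
    have "(\<Sum>i=1..n. \<Sum>j=1..n. \<gamma> i j * (y i - y j) * d j) = (\<Sum>i=1..n. - (\<gamma> a i * (y a - y i)))"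
    proof (rule sum.cong)
      fix i assume "i \<in> {1..n}"
      have "(\<Sum>j=1..n. \<gamma> i j * (y i - y j) * d j) = (\<Sum>j=1..n. if j = a then \<gamma> i a * (y i - y a) else 0)"
        by (rule sum.cong) (auto simp: d_def)
      also have "\<dots> = - (\<gamma> a i * (y a - y i))" using a sym[of i a] by (simp add: algebra_simps)
      finally show "(\<Sum>j=1..n. \<gamma> i j * (y i - y j) * d j) = - (\<gamma> a i * (y a - y i))" .
    qed simp
    then show ?thesis by (simp add: sum_negf)
  qed
  have P: "(\<Sum>i=1..n. \<Sum>j=1..n. \<gamma> i j * ((y i + u * d i) - (y j + u * d j))\<^sup>2)
     = (\<Sum>i=1..n. \<Sum>j=1..n. \<gamma> i j * (y i - y j)\<^sup>2) + 2 * u * (\<Sum>i=1..n. \<Sum>j=1..n. \<gamma> i j * (y i - y j) * d i)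
       - 2 * u * (\<Sum>i=1..n. \<Sum>j=1..n. \<gamma> i j * (y i - y j) * d j)
       + u\<^sup>2 * (\<Sum>i=1..n. \<Sum>j=1..n. \<gamma> i j * (d i - d j)\<^sup>2)"
    unfolding pt by (simp add: sum.distrib sum_subtractf sum_distrib_left)
  show ?thesis unfolding yd energy_def W1 P s1 s2
    by (simp add: d_def algebra_simps)
qed


lemma const_path:
  assumes "(i, k) \<in> R\<^sup>*" "\<And>a b. (a, b) \<in> R \<Longrightarrow> q a = q b"
  shows "q i = (q k :: real)"
  using assms by (induction rule: rtrancl_induct) auto

theorem mainTheorem1:
  fixes n :: nat and \<gamma> :: "nat \<Rightarrow> nat \<Rightarrow> real" and V1 V2 :: "nat set"
    and W :: "real \<Rightarrow> real" and \<kappa> :: real and x :: "nat \<Rightarrow> real"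
  assumes sym: "\<And>i j. \<gamma> i j = \<gamma> j i"
    and conn: "graph_connected n \<gamma>"
    and bal: "balanced n \<gamma>"
    and part: "V1 \<union> V2 = {1..n}" "V1 \<inter> V2 = {}"
    and same: "\<And>i j. (i \<in> V1 \<and> j \<in> V1) \<or> (i \<in> V2 \<and> j \<in> V2) \<Longrightarrow> \<gamma> i j \<ge> 0"
    and diff: "\<And>i j. (i \<in> V1 \<and> j \<in> V2) \<or> (i \<in> V2 \<and> j \<in> V1) \<Longrightarrow> \<gamma> i j \<le> 0"
    and W: "W \<in> W_class"
    and kappa: "\<kappa> > 0"
    and minim: "\<And>y. energy W n \<gamma> \<kappa> x \<le> energy W n \<gamma> \<kappa> y"
  shows "(\<forall>i\<in>{1..n}. x i \<noteq> 0) \<and>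
    (\<forall>i\<in>{1..n}. \<forall>j\<in>{1..n}. (sgn (x i) = sgn (x j) \<longleftrightarrow>
        ((i \<in> V1 \<and> j \<in> V1) \<or> (i \<in> V2 \<and> j \<in> V2))))"
proof -
  obtain m where m: "m > 0" and Wdec: "\<And>t. 0 < t \<Longrightarrow> t \<le> m \<Longrightarrow> W t < W 0"
    and ev: "\<And>x. W (-x) = W x" using W_facts[OF W] by blast
  define s :: "nat \<Rightarrow> real" where "s i = (if i \<in> V1 then 1 else -1)" for i
  define R where "R = {(a, b). a \<in> {1..n} \<and> b \<in> {1..n} \<and> \<gamma> a b \<noteq> 0}"
  have connR: "(i, j) \<in> R\<^sup>*" if "i \<in> {1..n}" "j \<in> {1..n}" for i j
    using conn that unfolding graph_connected_def R_def by blast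
  have ss: "s i * s i = 1" for i by (simp add: s_def)
  have gauge: "0 \<le> s i * s j * \<gamma> i j" if "i \<in> {1..n}" "j \<in> {1..n}" for i j
  proof -
    have "i \<in> V1 \<or> i \<in> V2" "j \<in> V1 \<or> j \<in> V2" using that part by auto
    moreover have "i \<in> V2 \<Longrightarrow> i \<notin> V1" "j \<in> V2 \<Longrightarrow> j \<notin> V1" using part by auto
    ultimately show ?thesis using same[of i j] diff[of i j] by (auto simp: s_def)
  qed
  define z where "z i = s i * \<bar>x i\<bar>" for i
  have Wz: "W (z i) = W (x i)" for i
    by (cases "i \<in> V1"; cases "x i \<ge> 0") (auto simp: z_def s_def ev)
  have sij: "s i * s j = 1 \<or> s i * s j = -1" for i j by (simp add: s_def)
  have zsq: "(z i - z j)\<^sup>2 = (x i)\<^sup>2 + (x j)\<^sup>2 - 2 * (s i * s j) * (\<bar>x i\<bar> * \<bar>x j\<bar>)" for i j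
  proof -
    have "(z i)\<^sup>2 = (x i)\<^sup>2" "(z j)\<^sup>2 = (x j)\<^sup>2"
      by (simp_all add: z_def s_def power_mult_distrib)
    moreover have "(z i - z j)\<^sup>2 = (z i)\<^sup>2 + (z j)\<^sup>2 - 2 * (z i * z j)" by (simp add: power2_diff)
    moreover have "z i * z j = s i * s j * (\<bar>x i\<bar> * \<bar>x j\<bar>)" by (simp add: z_def)
    ultimately show ?thesis by simp
  qed
  have Dform: "\<gamma> i j * (x i - x j)\<^sup>2 - \<gamma> i j * (z i - z j)\<^sup>2 = 2 * \<gamma> i j * (s i * s j * (\<bar>x i\<bar> * \<bar>x j\<bar>) - x i * x j)" for i j
    unfolding zsq by (simp add: power2_diff algebra_simps)
  have Dnn: "0 \<le> \<gamma> i j * (x i - x j)\<^sup>2 - \<gamma> i j * (z i - z j)\<^sup>2" if "i \<in> {1..n}" "j \<in> {1..n}" for i j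
  proof -
    have g: "0 \<le> s i * s j * \<gamma> i j" using gauge[OF that] .
    have a1: "x i * x j \<le> \<bar>x i\<bar> * \<bar>x j\<bar>" "- (\<bar>x i\<bar> * \<bar>x j\<bar>) \<le> x i * x j"
      by (metis abs_ge_self abs_mult, metis abs_ge_minus_self abs_mult minus_le_iff)
    from sij[of i j] have "0 \<le> 2 * \<gamma> i j * (s i * s j * (\<bar>x i\<bar> * \<bar>x j\<bar>) - x i * x j)"
    proof
      assume h: "s i * s j = 1"
      then have "0 \<le> \<gamma> i j" using g by simp
      then show ?thesis using a1 h by simp
    next
      assume h: "s i * s j = -1"
      then have "\<gamma> i j \<le> 0" using g by simp
      then show ?thesis using a1 h by (simp add: mult_nonpos_nonpos)
    qed
    then show ?thesis using Dform[of i j] by linarith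
  qed
  define T where "T y i j = \<gamma> i j * (y i - y j)\<^sup>2" for y :: "nat \<Rightarrow> real" and i j
  have Ediff: "energy W n \<gamma> \<kappa> x - energy W n \<gamma> \<kappa> z
      = \<kappa> / 2 * (\<Sum>i=1..n. \<Sum>j=1..n. T x i j - T z i j)"
    unfolding energy_def T_def Wz by (simp add: sum_subtractf algebra_simps)
  have Tnn: "0 \<le> T x i j - T z i j" if "i \<in> {1..n}" "j \<in> {1..n}" for i j
    using Dnn[OF that] unfolding T_def .
  have Snn: "0 \<le> (\<Sum>i=1..n. \<Sum>j=1..n. T x i j - T z i j)"
    using Dnn unfolding T_def by (intro sum_nonneg) auto
  have Ezx: "energy W n \<gamma> \<kappa> z \<le> energy W n \<gamma> \<kappa> x"
    using Ediff Snn kappa by (smt (verit) mult_nonneg_nonneg half_gt_zero)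
  have "energy W n \<gamma> \<kappa> x \<le> energy W n \<gamma> \<kappa> z" by (rule minim)
  then have S0: "(\<Sum>i=1..n. \<Sum>j=1..n. T x i j - T z i j) = 0"
    using Ediff Snn kappa by (smt (verit) zero_less_mult_iff half_gt_zero)
  have T0: "T x i j - T z i j = 0" if "i \<in> {1..n}" "j \<in> {1..n}" for i j
  proof -
    have "\<forall>i\<in>{1..n}. (\<Sum>j=1..n. T x i j - T z i j) = 0"
      using S0 by (subst (asm) sum_nonneg_eq_0_iff) (auto intro!: sum_nonneg Tnn)
    then have "(\<Sum>j=1..n. T x i j - T z i j) = 0" using that by auto
    moreover have "\<forall>j'\<in>{1..n}. 0 \<le> T x i j' - T z i j'" using Tnn that(1) by blast
    ultimately show ?thesis
      using that sum_nonneg_eq_0_iff[of "{1..n}" "\<lambda>j. T x i j - T z i j"] by auto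
  qed
  have eqterm: "x i * x j = s i * s j * (\<bar>x i\<bar> * \<bar>x j\<bar>)"
    if "i \<in> {1..n}" "j \<in> {1..n}" "\<gamma> i j \<noteq> 0" for i j
    using T0[OF that(1,2)] Dform[of i j] that(3) unfolding T_def by simp
  have sne: "s i \<noteq> 0" for i by (simp add: s_def)
  have Wsa: "W (s i * t) = W t" for i t by (simp add: s_def ev)
  have nz: "x i \<noteq> 0" if iin: "i \<in> {1..n}" for i
  proof (rule ccontr)
    assume "\<not> x i \<noteq> 0"
    then have xi0: "x i = 0" by simp
    show False
    proof (cases "\<exists>k\<in>{1..n}. x k \<noteq> 0")
      case False
      then have all0: "\<And>k. k \<in> {1..n} \<Longrightarrow> x k = 0" by auto
      define y where "y k = m * s k" for k
      have "energy W n \<gamma> \<kappa> x = (\<Sum>k=1..n. W 0)"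
        unfolding energy_def using all0 by simp
      then have Ex: "energy W n \<gamma> \<kappa> x = real n * W 0" by simp
      have pairs: "\<gamma> k l * (y k - y l)\<^sup>2 \<le> 0" if "k \<in> {1..n}" "l \<in> {1..n}" for k l
      proof -
        have g: "0 \<le> s k * s l * \<gamma> k l" using gauge[OF that] .
        have e: "\<gamma> k l * (y k - y l)\<^sup>2 = m\<^sup>2 * (2 * \<gamma> k l - 2 * (s k * s l * \<gamma> k l))"
          using ss[of k] ss[of l] by (simp add: y_def power2_eq_square algebra_simps)
        from sij[of k l] have "2 * \<gamma> k l - 2 * (s k * s l * \<gamma> k l) \<le> 0"
        proof
          assume "s k * s l = 1" then show ?thesis by simp
        next
          assume "s k * s l = -1" then show ?thesis using g by simp
        qed
        then show ?thesis unfolding e by (simp add: mult_nonneg_nonpos)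
      qed
      have "(\<Sum>k=1..n. \<Sum>l=1..n. \<gamma> k l * (y k - y l)\<^sup>2) \<le> 0"
        using pairs by (intro sum_nonpos) auto
      moreover have "(\<Sum>k=1..n. W (y k)) = real n * W m"
        unfolding y_def using Wsa[of _ m] by (simp add: mult.commute)
      ultimately have Ey: "energy W n \<gamma> \<kappa> y \<le> real n * W m"
        unfolding energy_def using kappa by (smt (verit) mult_nonneg_nonpos half_gt_zero)
      have "n \<ge> 1" using iin by simp
      moreover have "W m < W 0" using Wdec[of m] m by simp
      ultimately have "real n * W m < real n * W 0" by simp
      then show False using Ex Ey minim[of y] by simp
    next
      case True
      then obtain k where k: "k \<in> {1..n}" "x k \<noteq> 0" by auto
      obtain a b where ab: "(a, b) \<in> R" "x a = 0" "x b \<noteq> 0"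
        using boundary_edge[OF connR[OF iin k(1)], of "\<lambda>i. x i = 0"] xi0 k(2) by blast
      have a: "a \<in> {1..n}" and b: "b \<in> {1..n}" and gab: "\<gamma> a b \<noteq> 0"
        using ab(1) unfolding R_def by auto
      define P where "P = (\<Sum>j=1..n. s a * s j * \<gamma> a j * \<bar>x j\<bar>)"
      have "0 < P" unfolding P_def
      proof (rule sum_pos2[OF _ b])
        have "0 < s a * s b * \<gamma> a b" using gauge[OF a b] gab sne[of a] sne[of b]
          by (simp add: order_le_less)
        then show "0 < s a * s b * \<gamma> a b * \<bar>x b\<bar>" using ab(3) by simp
        show "0 \<le> s a * s j * \<gamma> a j * \<bar>x j\<bar>" if "j \<in> {1..n}" for j
          using gauge[OF a that] by simp
      qed simp
      define C where "C = (\<Sum>i=1..n. \<Sum>j=1..n. \<gamma> i j * ((if i = a then 1 else 0) - (if j = a then 1 else 0))\<^sup>2)"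
      define t where "t = min m (P / (\<bar>C\<bar> + 1))"
      have t0: "0 < t" using m \<open>0 < P\<close> by (simp add: t_def)
      have tm: "t \<le> m" by (simp add: t_def)
      have "t \<le> P / (\<bar>C\<bar> + 1)" by (simp add: t_def)
      then have tCP: "t * (\<bar>C\<bar> + 1) \<le> P"
        by (simp add: pos_le_divide_eq add_pos_nonneg)
      then have "t * \<bar>C\<bar> \<le> P - t" by (simp add: algebra_simps)
      then have h1: "t * (t * \<bar>C\<bar>) \<le> t * (P - t)" using t0 by (simp add: mult_left_mono)
      have h2: "t * t * C \<le> t * (t * \<bar>C\<bar>)"
        using t0 by (simp add: mult_left_mono mult.assoc[symmetric])
      have h3: "0 < t * t" using t0 by simp
      have tC: "t * t * C < t * P" using h1 h2 h3 by (simp add: algebra_simps)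
      define z' where "z' = (\<lambda>i. z i + (if i = a then s a * t else 0))"
      have ss2: "s a * (s a * X) = X" for X by (metis mult.assoc ss mult_1)
      have za: "z a = 0" using ab(2) by (simp add: z_def)
      have lin: "(\<Sum>j=1..n. \<gamma> a j * (z a - z j)) = - (s a * P)"
        unfolding za P_def z_def sum_distrib_left sum_negf[symmetric]
        by (rule sum.cong) (use ss2 ab(2) in \<open>simp_all add: algebra_simps\<close>)
      have "energy W n \<gamma> \<kappa> z' = energy W n \<gamma> \<kappa> z + (W (z a + s a * t) - W (z a))
         + \<kappa> / 2 * (4 * (s a * t) * (\<Sum>j=1..n. \<gamma> a j * (z a - z j)) + (s a * t)\<^sup>2 * C)"
        unfolding z'_def C_def by (rule energy_pert[OF sym a])
      also have "\<dots> = energy W n \<gamma> \<kappa> z + (W t - W 0) + \<kappa> / 2 * (- 4 * t * P + t * t * C)"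
      proof -
        have e1: "4 * (s a * t) * (- (s a * P)) = - 4 * t * P"
          by (simp add: s_def)
        have e2: "(s a * t)\<^sup>2 = t * t" by (simp add: power_mult_distrib s_def power2_eq_square)
        show ?thesis unfolding lin unfolding za e1 e2 by (simp only: add_0_left Wsa)
      qed
      also have "\<dots> < energy W n \<gamma> \<kappa> z"
      proof -
        have "W t - W 0 < 0" using Wdec[OF t0 tm] by simp
        moreover have "- 4 * t * P + t * t * C < 0"
        proof -
          have "0 < t * P" using t0 \<open>0 < P\<close> by simp
          then show ?thesis using tC by linarith
        qed
        ultimately have "(W t - W 0) + \<kappa> / 2 * (- 4 * t * P + t * t * C) < 0"
          using kappa by (simp add: add_neg_neg mult_pos_neg)
        then show ?thesis by linarith
      qed
      finally show False using Ezx minim[of z'] by simp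
    qed
  qed
  define q where "q k = sgn (x k) * s k" for k
  have qedge: "q a = q b" if "(a, b) \<in> R" for a b
  proof -
    have a: "a \<in> {1..n}" and b: "b \<in> {1..n}" and g: "\<gamma> a b \<noteq> 0"
      using that unfolding R_def by auto
    have e: "x a * x b = s a * s b * (\<bar>x a\<bar> * \<bar>x b\<bar>)" using eqterm[OF a b g] .
    have "x a \<noteq> 0" "x b \<noteq> 0" using nz a b by auto
    then have pos: "0 < \<bar>x a\<bar> * \<bar>x b\<bar>" by simp
    have sab: "sgn (s a * s b) = s a * s b" by (simp add: s_def)
    have "sgn (x a) * sgn (x b) = s a * s b"
      using arg_cong[OF e, of sgn] pos sab \<open>x a \<noteq> 0\<close> \<open>x b \<noteq> 0\<close> by (simp add: sgn_mult)
    then have "q a * q b = (s a * s b) * (s a * s b)" by (simp add: q_def algebra_simps)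
    also have "\<dots> = 1" by (simp add: s_def)
    finally have qq: "q a * q b = 1" .
    have "q a = 1 \<or> q a = -1" "q b = 1 \<or> q b = -1"
      using \<open>x a \<noteq> 0\<close> \<open>x b \<noteq> 0\<close> by (auto simp: q_def s_def sgn_if)
    then show ?thesis using qq by auto
  qed
  have qc: "q i = q j" if "i \<in> {1..n}" "j \<in> {1..n}" for i j
    using const_path[OF connR[OF that], of q] qedge by blast
  have final: "sgn (x i) = sgn (x j) \<longleftrightarrow> ((i \<in> V1 \<and> j \<in> V1) \<or> (i \<in> V2 \<and> j \<in> V2))"
    if i: "i \<in> {1..n}" and j: "j \<in> {1..n}" for i j
  proof -
    have "x i \<noteq> 0" "x j \<noteq> 0" using nz i j by auto
    moreover have "q i = q j" using qc[OF i j] .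
    moreover have "i \<in> V1 \<or> i \<in> V2" "j \<in> V1 \<or> j \<in> V2" using i j part(1) by auto
    moreover have "i \<in> V2 \<Longrightarrow> i \<notin> V1" "j \<in> V2 \<Longrightarrow> j \<notin> V1" using part(2) by auto
    ultimately show ?thesis
      by (cases "i \<in> V1"; cases "j \<in> V1"; cases "x i > 0"; cases "x j > 0")
         (auto simp: q_def s_def sgn_if)
  qed
  show ?thesis using nz final by blast
qed

end
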